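(* Let $q>1$ and $n>1$ be integers and let $S$ be a special orientable sequence of order $n$ over $\mathbb{Z}_q$ (an $\mathcal{SOS}_q(n)$). Then the period of $S$ is at most \[ \frac{q^n-q^{(n+1)/2}-q^{(n-1)/2}+1}{2} \text{ if $q$ and $n$ are both odd;}\qquad \frac{q^n-2q^{n/2}+1}{2} \text{ if $q$ is odd and $n$ is even;} \] \[ \frac{q^n-q^{(n+1)/2}-2q^{(n-1)/2}+2^{(n+3)/2}-2^{(n+1)/2}}{2} \text{ if $q$ is even and $n$ is odd;}\qquad \frac{q^n-2q^{n/2}+2^{(n+2)/2}-2^{n/2}}{2} \text{ if $q$ and $n$ are both even.} \]
   Context: For a periodic sequence $S=(s_i)$ over $\mathbb{Z}_q$ write $\mathbf{s}_n(i)=(s_i,s_{i+1},\ldots,s_{i+n-1})$. For an $n$-tuple $\mathbf{u}=(u_0,\ldots,u_{n-1})$, its reverse is $\mathbf{u}^R=(u_{n-1},\ldots,u_0)$ and its negative is $-\mathbf{u}=(-u_0,\ldots,-u_{n-1})$. A $q$-ary $n$-window sequence is a periodic sequence over $\mathbb{Z}_q$ of period $m$ such that $\mathbf{s}_n(i)=\mathbf{s}_n(j)$ implies $i\equiv j\pmod m$. It is an orientable sequence of order $n$ ($\mathcal{OS}_q(n)$) if moreover $\mathbf{s}_n(i)\neq\mathbf{s}_n(j)^R$ for all $i,j$; negative orientable ($\mathcal{NOS}_q(n)$) if $\mathbf{s}_n(i)\neq-\mathbf{s}_n(j)^R$ for all $i,j$; and special orientable ($\mathcal{SOS}_q(n)$)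 if it is both orientable and negative orientable. *)

theory Defs
  imports Main
begin

definition periodic_seq :: "int \<Rightarrow> nat \<Rightarrow> (nat \<Rightarrow> int) \<Rightarrow> bool" where
  "periodic_seq q m s \<longleftrightarrow> m \<ge> 1 \<and> (\<forall>i. s i \<in> {0..<q}) \<and> (\<forall>i. s (i + m) = s i)"

definition window :: "(nat \<Rightarrow> int) \<Rightarrow> nat \<Rightarrow> nat \<Rightarrow> int list" where
  "window s n i = map (\<lambda>k. s (i + k)) [0..<n]"

definition neg_tuple :: "int \<Rightarrow> int list \<Rightarrow> int list" where
  "neg_tuple q u = map (\<lambda>x. (- x) mod q) u"

definition n_window_seq :: "int \<Rightarrow> nat \<Rightarrow> nat \<Rightarrow> (nat \<Rightarrow> int) \<Rightarrow> bool" where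
  "n_window_seq q n m s \<longleftrightarrow> periodic_seq q m s \<and>
     (\<forall>i j. window s n i = window s n j \<longrightarrow> i mod m = j mod m)"

definition orientable_seq :: "int \<Rightarrow> nat \<Rightarrow> nat \<Rightarrow> (nat \<Rightarrow> int) \<Rightarrow> bool" where
  "orientable_seq q n m s \<longleftrightarrow> n_window_seq q n m s \<and>
     (\<forall>i j. window s n i \<noteq> rev (window s n j))"

definition neg_orientable_seq :: "int \<Rightarrow> nat \<Rightarrow> nat \<Rightarrow> (nat \<Rightarrow> int) \<Rightarrow> bool" where
  "neg_orientable_seq q n m s \<longleftrightarrow> n_window_seq q n m s \<and>
     (\<forall>i j. window s n i \<noteq> neg_tuple q (rev (window s n j)))"

definition special_orientable_seq :: "int \<Rightarrow> nat \<Rightarrow> nat \<Rightarrow> (nat \<Rightarrow> int) \<Rightarrow> bool" where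
  "special_orientable_seq q n m s \<longleftrightarrow> orientable_seq q n m s \<and> neg_orientable_seq q n m s"

end

theory Submission
  imports Defs
begin

lemma mirror_card:
  fixes B :: "'a set" and g :: "'a \<Rightarrow> 'a"
  assumes fin: "finite B" and gB: "\<And>x. x \<in> B \<Longrightarrow> g x \<in> B"
    and inv: "\<And>x. x \<in> B \<Longrightarrow> g (g x) = x"
  shows "card {u. length u = n \<and> set u \<subseteq> B \<and> rev u = map g u}
         = card B ^ (n div 2) * card {x\<in>B. g x = x} ^ (n mod 2)"
proof (induction n rule: less_induct)
  case (less n)
  show ?case
  proof (cases n)
    case 0
    then have "{u. length u = n \<and> set u \<subseteq> B \<and> rev u = map g u} = {[]}" by auto
    then show ?thesis using 0 by simp
  next
    case (Suc k)
    show ?thesis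
    proof (cases k)
      case 0
      have "{u. length u = n \<and> set u \<subseteq> B \<and> rev u = map g u}
            = (\<lambda>x. [x]) ` {x\<in>B. g x = x}"
      proof
        show "{u. length u = n \<and> set u \<subseteq> B \<and> rev u = map g u} \<subseteq> (\<lambda>x. [x]) ` {x\<in>B. g x = x}"
        proof
          fix u assume "u \<in> {u. length u = n \<and> set u \<subseteq> B \<and> rev u = map g u}"
          then show "u \<in> (\<lambda>x. [x]) ` {x\<in>B. g x = x}" using Suc 0
            by (cases u) auto
        qed
      qed (use Suc 0 in auto)
      moreover have "card ((\<lambda>x. [x]) ` {x\<in>B. g x = x}) = card {x\<in>B. g x = x}"
        by (rule card_image) (auto simp: inj_on_def)
      ultimately show ?thesis using Suc 0 by simp
    next
      case (Suc j)
      have nj: "n = Suc (Suc j)" using \<open>n = Suc k\<close> Suc by simp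
      let ?S = "{u. length u = j \<and> set u \<subseteq> B \<and> rev u = map g u}"
      have IH: "card ?S = card B ^ (j div 2) * card {x\<in>B. g x = x} ^ (j mod 2)"
        using less nj by simp
      have eq: "{u. length u = n \<and> set u \<subseteq> B \<and> rev u = map g u}
            = (\<lambda>(a,v). a # v @ [g a]) ` (B \<times> ?S)"
      proof
        show "{u. length u = n \<and> set u \<subseteq> B \<and> rev u = map g u} \<subseteq> (\<lambda>(a,v). a # v @ [g a]) ` (B \<times> ?S)"
        proof
          fix u assume u: "u \<in> {u. length u = n \<and> set u \<subseteq> B \<and> rev u = map g u}"
          have lu: "length u = Suc (Suc j)" using u nj by simp
          then obtain a w where uw: "u = a # w" by (cases u) auto
          with lu have "w \<noteq> []" by auto
          then obtain v b where wv: "w = v @ [b]" by (cases w rule: rev_exhaust) auto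
          have r: "rev u = map g u" and sB: "set u \<subseteq> B" using u by auto
          have e: "rev (a # v @ [b]) = map g (a # v @ [b])" using r uw wv by (simp only:)
          have e1: "rev (a # v @ [b]) = b # (rev v @ [a])" by simp
          have e2: "map g (a # v @ [b]) = g a # (map g v @ [g b])" by simp
          have "b # (rev v @ [a]) = g a # (map g v @ [g b])" using e e1 e2 by (simp only:)
          then have h: "b = g a \<and> rev v @ [a] = map g v @ [g b]" by (rule list.inject[THEN iffD1])
          then have "butlast (rev v @ [a]) = butlast (map g v @ [g b])" by (rule conjunct2[THEN arg_cong])
          then have "rev v = map g v" by (simp only: butlast_snoc)
          with h have "b = g a" "rev v = map g v" by blast+
          moreover have "length v = j" using lu uw wv by simp
          moreover have "set v \<subseteq> B" "a \<in> B" using sB uw wv by auto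
          ultimately have "b = g a" "rev v = map g v" "length v = j" "set v \<subseteq> B" "a \<in> B"
            by blast+
          then have m: "(a, v) \<in> B \<times> ?S" and ub: "u = a # v @ [g a]" using uw wv by auto
          show "u \<in> (\<lambda>(a,v). a # v @ [g a]) ` (B \<times> ?S)"
            by (rule image_eqI[OF _ m]) (simp only: ub prod.case)
        qed
      next
        show "(\<lambda>(a,v). a # v @ [g a]) ` (B \<times> ?S) \<subseteq> {u. length u = n \<and> set u \<subseteq> B \<and> rev u = map g u}"
        proof
          fix x assume "x \<in> (\<lambda>(a,v). a # v @ [g a]) ` (B \<times> ?S)"
          then obtain a v where x: "x = a # v @ [g a]" and a: "a \<in> B" and v: "length v = j" "set v \<subseteq> B" "rev v = map g v"
            by auto
          then show "x \<in> {u. length u = n \<and> set u \<subseteq> B \<and> rev u = map g u}"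
            using nj gB[of a] inv[of a] by simp
        qed
      qed
      have "inj_on (\<lambda>(a,v). a # v @ [g a]) (B \<times> ?S)"
        by (rule inj_onI) auto
      then have "card ((\<lambda>(a,v). a # v @ [g a]) ` (B \<times> ?S)) = card B * card ?S"
        by (simp add: card_image card_cartesian_product)
      then show ?thesis using eq IH nj by simp
    qed
  qed
qed


lemma neg_in:
  fixes q x :: int assumes "q > 1" shows "(- x) mod q \<in> {0..<q}"
  using assms by simp

lemma neg_inv:
  fixes q x :: int assumes "q > 1" "x \<in> {0..<q}" shows "(- ((- x) mod q)) mod q = x"
proof -
  have "(- ((- x) mod q)) mod q = (- (- x)) mod q" by (rule mod_minus_eq)
  also have "\<dots> = x" using assms by simp
  finally show ?thesis .
qed

lemma neg_fixed:
  fixes q :: int assumes "q > 1"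
  shows "{x\<in>{0..<q}. (- x) mod q = x} = (if even q then {0, q div 2} else {0})"
proof -
  have key: "(- x) mod q = x \<longleftrightarrow> x = 0 \<or> 2 * x = q" if "x \<in> {0..<q}" for x
  proof (cases "x = 0")
    case True then show ?thesis by simp
  next
    case False
    with that have x: "0 < x" "x < q" by auto
    have "- x = (q - x) + (-1) * q" by simp
    then have "(- x) mod q = (q - x) mod q" by (metis mod_mult_self1)
    also have "\<dots> = q - x" using x by (intro mod_pos_pos_trivial) auto
    finally show ?thesis using False by auto
  qed
  show ?thesis
  proof (cases "even q")
    case True
    then obtain r where r: "q = 2 * r" by blast
    show ?thesis using True key r assms by auto
  next
    case False
    have "2 * x \<noteq> q" for x using False by auto
    then show ?thesis using False key assms by auto
  qed
qed

lemma neg_fixed_card: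
  fixes q :: int assumes "q > 1"
  shows "card {x\<in>{0..<q}. (- x) mod q = x} = (if even q then 2 else 1)"
proof (cases "even q")
  case True
  have "q div 2 \<noteq> 0" using assms by auto
  then show ?thesis using neg_fixed[OF assms] True by simp
next
  case False
  then show ?thesis using neg_fixed[OF assms] by simp
qed


lemma count_bound:
  fixes q :: int and n m :: nat and s :: "nat \<Rightarrow> int"
  assumes q1: "q > 1" and so: "special_orientable_seq q n m s"
  shows "2 * int m + q ^ (n div 2) * q ^ (n mod 2)
           + q ^ (n div 2) * (if even q then 2 else 1) ^ (n mod 2)
         \<le> q ^ n + (if even q then 2 else 1) ^ (n div 2) * (if even q then 2 else 1) ^ (n mod 2)"
proof -
  define B where "B = {0..<q}"
  define neg where "neg = (\<lambda>x::int. (- x) mod q)"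
  define C where "C = {x\<in>B. neg x = x}"
  define A where "A = {u. set u \<subseteq> B \<and> length u = n}"
  define P where "P = {u. length u = n \<and> set u \<subseteq> B \<and> rev u = map id u}"
  define F where "F = {u. length u = n \<and> set u \<subseteq> B \<and> rev u = map neg u}"
  define PF where "PF = {u. length u = n \<and> set u \<subseteq> C \<and> rev u = map id u}"
  define W where "W = window s n ` {0..<m}"
  have finB: "finite B" unfolding B_def by simp
  have cardB: "card B = nat q" unfolding B_def by simp
  have finA: "finite A" unfolding A_def using finB by (rule finite_lists_length_eq)
  have cardA: "card A = nat q ^ n" unfolding A_def using finB cardB by (simp add: card_lists_length_eq)
  have negB: "neg x \<in> B" for x unfolding neg_def B_def using q1 by simp
  have neginv: "x \<in> B \<Longrightarrow> neg (neg x) = x" for x unfolding neg_def B_def using q1 neg_inv by blast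
  have cardC: "card C = (if even q then 2 else 1)"
    unfolding C_def B_def neg_def using neg_fixed_card[OF q1] by simp
  have cardP: "card P = nat q ^ (n div 2) * nat q ^ (n mod 2)"
  proof -
    have "card P = card B ^ (n div 2) * card {x\<in>B. id x = x} ^ (n mod 2)"
      unfolding P_def by (rule mirror_card[OF finB]) auto
    then show ?thesis using cardB by simp
  qed
  have cardF: "card F = nat q ^ (n div 2) * (if even q then 2 else 1) ^ (n mod 2)"
  proof -
    have "card F = card B ^ (n div 2) * card {x\<in>B. neg x = x} ^ (n mod 2)"
      unfolding F_def by (rule mirror_card[OF finB negB neginv])
    then show ?thesis using cardB cardC C_def by simp
  qed
  have cardPF: "card PF = (if even q then 2 else 1) ^ (n div 2) * (if even q then 2 else 1) ^ (n mod 2)"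
  proof -
    have finC: "finite C" unfolding C_def using finB by simp
    have "card PF = card C ^ (n div 2) * card {x\<in>C. id x = x} ^ (n mod 2)"
      unfolding PF_def by (rule mirror_card[OF finC]) auto
    then show ?thesis using cardC by simp
  qed
  have PFeq: "P \<inter> F = PF"
  proof
    show "P \<inter> F \<subseteq> PF"
    proof
      fix u assume "u \<in> P \<inter> F"
      then have l: "length u = n" and sb: "set u \<subseteq> B" and r1: "rev u = u" and r2: "rev u = map neg u"
        unfolding P_def F_def by auto
      have "map neg u = u" using r1 r2 by simp
      then have "\<forall>x\<in>set u. neg x = x" by (metis map_eq_conv list.map_id id_apply)
      then have "set u \<subseteq> C" using sb unfolding C_def by auto
      then show "u \<in> PF" unfolding PF_def using l r1 by simp
    qed
  next
    show "PF \<subseteq> P \<inter> F"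
    proof
      fix u assume "u \<in> PF"
      then have l: "length u = n" and sb: "set u \<subseteq> C" and r1: "rev u = u"
        unfolding PF_def by auto
      have "map neg u = u" using sb unfolding C_def by (intro map_idI) auto
      then show "u \<in> P \<inter> F" using l sb r1 unfolding P_def F_def C_def by auto
    qed
  qed
  have PA: "P \<union> F \<subseteq> A" unfolding P_def F_def A_def by auto
  have finPF: "finite (P \<union> F)" using finite_subset[OF PA finA] .
  have cardUn: "card (P \<union> F) + card PF = card P + card F"
    using card_Un_Int[of P F] finPF PFeq by simp
  have so1: "orientable_seq q n m s" and so2: "neg_orientable_seq q n m s"
    using so unfolding special_orientable_seq_def by blast+
  have ori: "\<And>i j. window s n i \<noteq> rev (window s n j)" and nw: "n_window_seq q n m s"
    using so1 unfolding orientable_seq_def by blast+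
  have nori: "\<And>i j. window s n i \<noteq> neg_tuple q (rev (window s n j))"
    using so2 unfolding neg_orientable_seq_def by blast
  have per: "periodic_seq q m s" and inj: "\<And>i j. window s n i = window s n j \<Longrightarrow> i mod m = j mod m"
    using nw unfolding n_window_seq_def by blast+
  have sval: "s i \<in> B" for i using per unfolding periodic_seq_def B_def by auto
  have ntup: "neg_tuple q u = map neg u" for u unfolding neg_tuple_def neg_def by simp
  have injW: "inj_on (window s n) {0..<m}"
  proof (rule inj_onI)
    fix i j assume "i \<in> {0..<m}" "j \<in> {0..<m}" "window s n i = window s n j"
    then show "i = j" using inj[of i j] by simp
  qed
  have cardW: "card W = m" unfolding W_def using injW by (simp add: card_image)
  have cardRW: "card (rev ` W) = m" using cardW by (simp add: card_image inj_on_def)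
  have winA: "window s n i \<in> A" for i unfolding A_def window_def using sval by auto
  have notP: "window s n i \<notin> P" for i
  proof
    assume "window s n i \<in> P"
    then have "rev (window s n i) = window s n i" unfolding P_def by simp
    then show False using ori[of i i] by simp
  qed
  have notF: "window s n i \<notin> F" for i
  proof
    assume "window s n i \<in> F"
    then have "rev (window s n i) = map neg (window s n i)" unfolding F_def by simp
    then have "map neg (rev (window s n i)) = map neg (map neg (window s n i))" by simp
    also have "\<dots> = window s n i" using neginv sval unfolding window_def by simp
    finally show False using nori[of i i] ntup by simp
  qed
  have rnotP: "rev (window s n i) \<notin> P" for i
  proof
    assume "rev (window s n i) \<in> P"
    then have "rev (rev (window s n i)) = rev (window s n i)" unfolding P_def by simp
    then show False using ori[of i i] by simp
  qed
  have rnotF: "rev (window s n i) \<notin> F" for i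
  proof
    assume "rev (window s n i) \<in> F"
    then have "rev (rev (window s n i)) = map neg (rev (window s n i))" unfolding F_def by simp
    then have "window s n i = neg_tuple q (rev (window s n i))" using ntup by simp
    then show False using nori[of i i] by simp
  qed
  have rinA: "rev (window s n i) \<in> A" for i using winA[of i] unfolding A_def by simp
  have sub: "W \<union> rev ` W \<subseteq> A - (P \<union> F)"
    unfolding W_def using winA notP notF rnotP rnotF rinA by auto
  have disj: "W \<inter> rev ` W = {}" unfolding W_def using ori by auto
  have finW: "finite W" unfolding W_def by simp
  have "card (W \<union> rev ` W) = 2 * m"
    using card_Un_disjoint[OF finW _ disj] finW cardW cardRW by simp
  moreover have "card (W \<union> rev ` W) \<le> card (A - (P \<union> F))"
    by (rule card_mono[OF _ sub]) (use finA in simp)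
  moreover have "card (A - (P \<union> F)) = card A - card (P \<union> F)"
    using card_Diff_subset[OF finPF PA] .
  moreover have "card (P \<union> F) \<le> card A" using card_mono[OF finA PA] .
  ultimately have "2 * m + card (P \<union> F) \<le> card A" by linarith
  then have "2 * m + card P + card F \<le> card A + card PF" using cardUn by linarith
  then have "int (2 * m + card P + card F) \<le> int (card A + card PF)" by linarith
  then have "2 * int m + int (card P) + int (card F) \<le> int (card A) + int (card PF)" by simp
  moreover have "int (nat q) = q" using q1 by simp
  ultimately show ?thesis unfolding cardA cardP cardF cardPF
    by (cases "even q") (simp_all add: of_nat_mult)
qed


theorem theorem2p1:
  fixes q :: int and n m :: nat and s :: "nat \<Rightarrow> int"
  assumes "q > 1" and "n > 1"
    and "special_orientable_seq q n m s"
  shows "(odd q \<and> odd n \<longrightarrow>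
            2 * int m \<le> q ^ n - q ^ ((n + 1) div 2) - q ^ ((n - 1) div 2) + 1)
       \<and> (odd q \<and> even n \<longrightarrow>
            2 * int m \<le> q ^ n - 2 * q ^ (n div 2) + 1)
       \<and> (even q \<and> odd n \<longrightarrow>
            2 * int m \<le> q ^ n - q ^ ((n + 1) div 2) - 2 * q ^ ((n - 1) div 2)
                          + 2 ^ ((n + 3) div 2) - 2 ^ ((n + 1) div 2))
       \<and> (even q \<and> even n \<longrightarrow>
            2 * int m \<le> q ^ n - 2 * q ^ (n div 2) + 2 ^ ((n + 2) div 2) - 2 ^ (n div 2))"
proof -
  have cb: "2 * int m + q ^ (n div 2) * q ^ (n mod 2)
           + q ^ (n div 2) * (if even q then 2 else 1) ^ (n mod 2)
         \<le> q ^ n + (if even q then 2 else 1) ^ (n div 2) * (if even q then 2 else 1) ^ (n mod 2)"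
    using count_bound[OF assms(1,3)] .
  show ?thesis
  proof (cases "even n")
    case True
    then obtain k where k: "n = 2 * k" by blast
    have d: "n div 2 = k" "n mod 2 = 0" "(n + 2) div 2 = k + 1" using k by simp_all
    have p: "(2::int) ^ (k + 1) = 2 * 2 ^ k" by simp
    show ?thesis using cb True unfolding d p by (cases "even q") simp_all
  next
    case False
    then obtain k where k: "n = 2 * k + 1" using oddE by blast
    have d: "n div 2 = k" "n mod 2 = 1" "(n + 1) div 2 = k + 1" "(n - 1) div 2 = k"
      "(n + 3) div 2 = k + 2" using k by simp_all
    have p: "(2::int) ^ (k + 2) = 2 * 2 ^ (k + 1)" "q ^ (k + 1) = q ^ k * q" by simp_all
    show ?thesis using cb False unfolding d p by (cases "even q") (simp_all add: algebra_simps)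
  qed
qed

end
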